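(* Assume $L/F$ is unramified. If $\Phi\in\pi_{\tau,\chi}^{K_n}$ with $n\ge1$, then $\operatorname{supp}(\Phi)\subset\mathfrak p_L^{\lceil(c-n)/2\rceil}$ and $\Phi$ is constant on cosets of $\mathfrak p_L^{\,c-\lceil(c-n)/2\rceil}$.
   Context: $F$ is a $p$-adic field with $p\ne2$, ring of integers $\mathcal O$ with maximal ideal $\mathfrak p$, residue field of order $q$. $L/F$ is a quadratic extension with ring of integers $\mathcal O_L$, maximal ideal $\mathfrak p_L$, conjugation $x\mapsto\overline x$, norm $N:L\to F$, $L^1=\ker N$; $\omega$ is the nontrivial character of $F^\times/N(L^\times)$. $\chi$ is a character of $L^\times$ not factoring through $N$. $\tau$ is a nontrivial additive character of $F$ with conductor $\mathfrak p^c$, i.e. $\tau$ is trivial on $\mathfrak p^m$ iff $m\ge c$. Put $\langle x,y\rangle=\tau(\operatorname{tr}_{L/F}(xy))$ and $\widehat\Phi(x)=\int_L\Phi(y)\langle x,y\rangle\,dy$ for Schwartz functions $\Phi$ on $L$, with Haar measure normalized so that $\widehat{\widehat\Phi}(x)=\Phi(-x)$. $\mathcal S(L)_\chi$ is the space of Schwartz functions with $\Phi(xy)=\chi(y)^{-1}\Phi(x)$ for $y\in L^1$. $G_+=\{g\in GL_2(F):\det g\in N(L^\times)\}$, and $\pi_{\tau,\chi}$ is the irreducible representation of $G_+$ on $\mathcal S(L)_\chi$ satisfying $\pi_{\tau,\chi}\begin{pmatrix}1&u\\0&1\end{pmatrix}\Phi(x)=\tau(uN(x))\Phi(x)$, $\pi_{\tau,\chi}\begin{pmatrix}a&0\\0&a^{-1}\end{pmatrix}\Phi(x)=\omega(a)|a|_L^{1/2}\Phi(ax)$,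 $\pi_{\tau,\chi}\begin{pmatrix}0&1\\-1&0\end{pmatrix}\Phi(x)=\gamma\widehat\Phi(\overline x)$ for some complex $\gamma$ with $|\gamma|=1$. $K_n$ is the principal congruence subgroup of $GL_2(F)$ of level $n$ (contained in $G_+$ for $n\ge1$). *)

theory Defs
  imports Complex_Main
begin

text \<open>The valuation v of L is normalized (surjective onto the integers on L - {0});
  the value at 0 is irrelevant (0 is handled separately).\<close>

definition pL :: "('l::field \<Rightarrow> int) \<Rightarrow> int \<Rightarrow> 'l set" where
  "pL v k = {x. x = 0 \<or> k \<le> v x}"

definition is_dval :: "('l::field \<Rightarrow> int) \<Rightarrow> bool" where
  "is_dval v \<longleftrightarrow>
     (\<forall>x y. x \<noteq> 0 \<longrightarrow> y \<noteq> 0 \<longrightarrow> v (x * y) = v x + v y) \<and>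
     (\<forall>x y. x \<noteq> 0 \<longrightarrow> y \<noteq> 0 \<longrightarrow> x + y \<noteq> 0 \<longrightarrow> min (v x) (v y) \<le> v (x + y)) \<and>
     (\<forall>k. \<exists>x. x \<noteq> 0 \<and> v x = k)"

definition v_complete :: "('l::field \<Rightarrow> int) \<Rightarrow> bool" where
  "v_complete v \<longleftrightarrow>
     (\<forall>s :: nat \<Rightarrow> 'l. (\<forall>k. \<exists>N. \<forall>m\<ge>N. \<forall>n\<ge>N. s m - s n \<in> pL v k) \<longrightarrow>
        (\<exists>l. \<forall>k. \<exists>N. \<forall>n\<ge>N. s n - l \<in> pL v k))"

definition residue_field :: "('l::field \<Rightarrow> int) \<Rightarrow> 'l set set" where
  "residue_field v = {{y. y - x \<in> pL v 1} | x. x \<in> pL v 0}"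

definition p_adic_field :: "('l::field_char_0 \<Rightarrow> int) \<Rightarrow> bool" where
  "p_adic_field v \<longleftrightarrow> is_dval v \<and> v_complete v \<and> finite (residue_field v)"

definition resQ :: "('l::field \<Rightarrow> int) \<Rightarrow> nat" where
  "resQ v = card (residue_field v)"

definition absL :: "('l::field \<Rightarrow> int) \<Rightarrow> 'l \<Rightarrow> real" where
  "absL v x = (if x = 0 then 0 else real (resQ v) powr (- real_of_int (v x)))"

text \<open>F is the fixed field of the nontrivial involutive automorphism \<sigma> (conjugation) of L.\<close>
definition quad_conj :: "('l::field \<Rightarrow> 'l) \<Rightarrow> bool" where
  "quad_conj \<sigma> \<longleftrightarrow> (\<forall>x y. \<sigma> (x + y) = \<sigma> x + \<sigma> y) \<and> (\<forall>x y. \<sigma> (x * y) = \<sigma> x * \<sigma> y)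
     \<and> \<sigma> 1 = 1 \<and> (\<forall>x. \<sigma> (\<sigma> x) = x) \<and> (\<exists>x. \<sigma> x \<noteq> x)"

definition Fset :: "('l \<Rightarrow> 'l) \<Rightarrow> 'l set" where
  "Fset \<sigma> = {x. \<sigma> x = x}"

definition Nm :: "('l::field \<Rightarrow> 'l) \<Rightarrow> 'l \<Rightarrow> 'l" where
  "Nm \<sigma> x = x * \<sigma> x"

definition Tr :: "('l::field \<Rightarrow> 'l) \<Rightarrow> 'l \<Rightarrow> 'l" where
  "Tr \<sigma> x = x + \<sigma> x"

definition NLx :: "('l::field \<Rightarrow> 'l) \<Rightarrow> 'l set" where
  "NLx \<sigma> = Nm \<sigma> ` {x. x \<noteq> 0}"

definition omega :: "('l::field \<Rightarrow> 'l) \<Rightarrow> 'l \<Rightarrow> complex" where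
  "omega \<sigma> a = (if a \<in> NLx \<sigma> then 1 else -1)"

text \<open>L/F unramified: a uniformizer of L lies in F.\<close>
definition unramified :: "('l::field \<Rightarrow> int) \<Rightarrow> ('l \<Rightarrow> 'l) \<Rightarrow> bool" where
  "unramified v \<sigma> \<longleftrightarrow> (\<exists>w \<in> Fset \<sigma>. w \<noteq> 0 \<and> v w = 1)"

text \<open>Nontrivial additive character \<tau> of F with conductor p^c, where
  p^m = F \<inter> p_L^m (valid since L/F is unramified).\<close>
definition add_char_conductor :: "('l::field \<Rightarrow> int) \<Rightarrow> ('l \<Rightarrow> 'l) \<Rightarrow> ('l \<Rightarrow> complex) \<Rightarrow> int \<Rightarrow> bool" where
  "add_char_conductor v \<sigma> \<tau> c \<longleftrightarrow>
     (\<forall>x\<in>Fset \<sigma>. \<forall>y\<in>Fset \<sigma>. \<tau> (x + y) = \<tau> x * \<tau> y) \<and>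
     (\<forall>x\<in>Fset \<sigma>. cmod (\<tau> x) = 1) \<and>
     (\<forall>m::int. (\<forall>x \<in> Fset \<sigma> \<inter> pL v m. \<tau> x = 1) \<longleftrightarrow> c \<le> m)"

text \<open>(Continuous) character of L^x: multiplicative, nonvanishing, trivial on some 1 + p_L^k.\<close>
definition char_Lx :: "('l::field \<Rightarrow> int) \<Rightarrow> ('l \<Rightarrow> complex) \<Rightarrow> bool" where
  "char_Lx v \<chi> \<longleftrightarrow>
     (\<forall>x y. x \<noteq> 0 \<longrightarrow> y \<noteq> 0 \<longrightarrow> \<chi> (x * y) = \<chi> x * \<chi> y) \<and>
     (\<forall>x. x \<noteq> 0 \<longrightarrow> \<chi> x \<noteq> 0) \<and>
     (\<exists>k>0. \<forall>x u. x \<noteq> 0 \<longrightarrow> u \<in> pL v k \<longrightarrow> \<chi> (x * (1 + u)) = \<chi> x)"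

definition factors_through_norm :: "('l::field \<Rightarrow> 'l) \<Rightarrow> ('l \<Rightarrow> complex) \<Rightarrow> bool" where
  "factors_through_norm \<sigma> \<chi> \<longleftrightarrow> (\<exists>\<eta>. \<forall>x. x \<noteq> 0 \<longrightarrow> \<chi> x = \<eta> (Nm \<sigma> x))"

definition schwartz :: "('l::field \<Rightarrow> int) \<Rightarrow> ('l \<Rightarrow> complex) \<Rightarrow> bool" where
  "schwartz v \<Phi> \<longleftrightarrow> (\<exists>a. \<forall>x. \<Phi> x \<noteq> 0 \<longrightarrow> x \<in> pL v a) \<and>
                     (\<exists>b. \<forall>x y. y \<in> pL v b \<longrightarrow> \<Phi> (x + y) = \<Phi> x)"

definition S_chi :: "('l::field \<Rightarrow> int) \<Rightarrow> ('l \<Rightarrow> 'l) \<Rightarrow> ('l \<Rightarrow> complex) \<Rightarrow> ('l \<Rightarrow> complex) set" where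
  "S_chi v \<sigma> \<chi> = {\<Phi>. schwartz v \<Phi> \<and> (\<forall>x y. Nm \<sigma> y = 1 \<longrightarrow> \<Phi> (x * y) = inverse (\<chi> y) * \<Phi> x)}"

definition pairing :: "('l::field \<Rightarrow> 'l) \<Rightarrow> ('l \<Rightarrow> complex) \<Rightarrow> 'l \<Rightarrow> 'l \<Rightarrow> complex" where
  "pairing \<sigma> \<tau> x y = \<tau> (Tr \<sigma> (x * y))"

text \<open>A Haar integral on Schwartz functions of L: a nonzero positive
  translation-invariant linear functional.\<close>
definition haar_integral :: "('l::field \<Rightarrow> int) \<Rightarrow> (('l \<Rightarrow> complex) \<Rightarrow> complex) \<Rightarrow> bool" where
  "haar_integral v I \<longleftrightarrow>
     (\<forall>\<Phi> \<Psi>. schwartz v \<Phi> \<longrightarrow> schwartz v \<Psi> \<longrightarrow> I (\<lambda>x. \<Phi> x + \<Psi> x) = I \<Phi> + I \<Psi>) \<and>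
     (\<forall>\<Phi> c. schwartz v \<Phi> \<longrightarrow> I (\<lambda>x. c * \<Phi> x) = c * I \<Phi>) \<and>
     (\<forall>\<Phi> a. schwartz v \<Phi> \<longrightarrow> I (\<lambda>x. \<Phi> (x + a)) = I \<Phi>) \<and>
     (\<forall>\<Phi>. schwartz v \<Phi> \<longrightarrow> (\<forall>x. Im (\<Phi> x) = 0 \<and> 0 \<le> Re (\<Phi> x)) \<longrightarrow> Im (I \<Phi>) = 0 \<and> 0 \<le> Re (I \<Phi>)) \<and>
     I (\<lambda>x. if x \<in> pL v 0 then 1 else 0) \<noteq> 0"

definition FT :: "(('l::field \<Rightarrow> complex) \<Rightarrow> complex) \<Rightarrow> ('l \<Rightarrow> 'l) \<Rightarrow> ('l \<Rightarrow> complex) \<Rightarrow> ('l \<Rightarrow> complex) \<Rightarrow> ('l \<Rightarrow> complex)" where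
  "FT I \<sigma> \<tau> \<Phi> = (\<lambda>x. I (\<lambda>y. \<Phi> y * pairing \<sigma> \<tau> x y))"

definition self_dual :: "('l::field \<Rightarrow> int) \<Rightarrow> (('l \<Rightarrow> complex) \<Rightarrow> complex) \<Rightarrow> ('l \<Rightarrow> 'l) \<Rightarrow> ('l \<Rightarrow> complex) \<Rightarrow> bool" where
  "self_dual v I \<sigma> \<tau> \<longleftrightarrow> (\<forall>\<Phi>. schwartz v \<Phi> \<longrightarrow> FT I \<sigma> \<tau> (FT I \<sigma> \<tau> \<Phi>) = (\<lambda>x. \<Phi> (- x)))"

text \<open>(a,b,c,d) stands for the matrix [[a,b],[c,d]].\<close>
type_synonym 'a m2 = "'a \<times> 'a \<times> 'a \<times> 'a"

fun m2mul :: "'a::comm_ring_1 m2 \<Rightarrow> 'a m2 \<Rightarrow> 'a m2" where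
  "m2mul (a, b, c, d) (a', b', c', d') =
     (a * a' + b * c', a * b' + b * d', c * a' + d * c', c * b' + d * d')"

fun m2det :: "'a::comm_ring_1 m2 \<Rightarrow> 'a" where
  "m2det (a, b, c, d) = a * d - b * c"

definition Gplus :: "('l::field \<Rightarrow> 'l) \<Rightarrow> 'l m2 set" where
  "Gplus \<sigma> = {(a, b, c, d). a \<in> Fset \<sigma> \<and> b \<in> Fset \<sigma> \<and> c \<in> Fset \<sigma> \<and> d \<in> Fset \<sigma> \<and>
                 m2det (a, b, c, d) \<in> NLx \<sigma>}"

text \<open>principal congruence subgroup of level n (entries in F; for n \<ge> 1 automatically in GL_2(O))\<close>
definition Kn :: "('l::field \<Rightarrow> int) \<Rightarrow> ('l \<Rightarrow> 'l) \<Rightarrow> nat \<Rightarrow> 'l m2 set" where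
  "Kn v \<sigma> n = {(a, b, c, d). a \<in> Fset \<sigma> \<and> b \<in> Fset \<sigma> \<and> c \<in> Fset \<sigma> \<and> d \<in> Fset \<sigma> \<and>
       a - 1 \<in> pL v (int n) \<and> b \<in> pL v (int n) \<and> c \<in> pL v (int n) \<and> d - 1 \<in> pL v (int n)}"

definition weil_rep ::
  "('l::field \<Rightarrow> int) \<Rightarrow> ('l \<Rightarrow> 'l) \<Rightarrow> ('l \<Rightarrow> complex) \<Rightarrow> ('l \<Rightarrow> complex) \<Rightarrow>
   (('l \<Rightarrow> complex) \<Rightarrow> complex) \<Rightarrow> ('l m2 \<Rightarrow> ('l \<Rightarrow> complex) \<Rightarrow> ('l \<Rightarrow> complex)) \<Rightarrow> bool" where
  "weil_rep v \<sigma> \<tau> \<chi> I \<pi> \<longleftrightarrow>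
     (let S = S_chi v \<sigma> \<chi> in
     (\<forall>g\<in>Gplus \<sigma>. \<forall>\<Phi>\<in>S. \<pi> g \<Phi> \<in> S) \<and>
     (\<forall>g\<in>Gplus \<sigma>. \<forall>\<Phi>\<in>S. \<forall>\<Psi>\<in>S. \<pi> g (\<lambda>x. \<Phi> x + \<Psi> x) = (\<lambda>x. \<pi> g \<Phi> x + \<pi> g \<Psi> x)) \<and>
     (\<forall>g\<in>Gplus \<sigma>. \<forall>\<Phi>\<in>S. \<forall>z. \<pi> g (\<lambda>x. z * \<Phi> x) = (\<lambda>x. z * \<pi> g \<Phi> x)) \<and>
     (\<forall>\<Phi>\<in>S. \<pi> (1, 0, 0, 1) \<Phi> = \<Phi>) \<and>
     (\<forall>g\<in>Gplus \<sigma>. \<forall>h\<in>Gplus \<sigma>. \<forall>\<Phi>\<in>S. \<pi> (m2mul g h) \<Phi> = \<pi> g (\<pi> h \<Phi>)) \<and>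
     (\<forall>W. W \<subseteq> S \<longrightarrow> (\<lambda>x. 0) \<in> W \<longrightarrow>
          (\<forall>\<Phi>\<in>W. \<forall>\<Psi>\<in>W. (\<lambda>x. \<Phi> x + \<Psi> x) \<in> W) \<longrightarrow>
          (\<forall>\<Phi>\<in>W. \<forall>z. (\<lambda>x. z * \<Phi> x) \<in> W) \<longrightarrow>
          (\<forall>g\<in>Gplus \<sigma>. \<forall>\<Phi>\<in>W. \<pi> g \<Phi> \<in> W) \<longrightarrow>
          W = {\<lambda>x. 0} \<or> W = S) \<and>
     (\<forall>u\<in>Fset \<sigma>. \<forall>\<Phi>\<in>S. \<pi> (1, u, 0, 1) \<Phi> = (\<lambda>x. \<tau> (u * Nm \<sigma> x) * \<Phi> x)) \<and>
     (\<forall>a\<in>Fset \<sigma>. a \<noteq> 0 \<longrightarrow> (\<forall>\<Phi>\<in>S. \<pi> (a, 0, 0, inverse a) \<Phi> =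
          (\<lambda>x. omega \<sigma> a * complex_of_real (sqrt (absL v a)) * \<Phi> (a * x)))) \<and>
     (\<exists>\<gamma>. cmod \<gamma> = 1 \<and> (\<forall>\<Phi>\<in>S. \<pi> (0, 1, -1, 0) \<Phi> = (\<lambda>x. \<gamma> * FT I \<sigma> \<tau> \<Phi> (\<sigma> x)))))"

end

theory Submission
  imports Defs
begin

lemma dv_mult: "is_dval v \<Longrightarrow> x \<noteq> 0 \<Longrightarrow> y \<noteq> 0 \<Longrightarrow> v (x * y) = v x + v y"
  unfolding is_dval_def by blast
lemma dv_ultra: "is_dval v \<Longrightarrow> x \<noteq> 0 \<Longrightarrow> y \<noteq> 0 \<Longrightarrow> x + y \<noteq> 0 \<Longrightarrow> min (v x) (v y) \<le> v (x + y)"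
  unfolding is_dval_def by blast
lemma dv_one: "is_dval v \<Longrightarrow> v (1::'a::field) = 0"
  using dv_mult[of v "1::'a" 1] by simp
lemma dv_m1: "is_dval v \<Longrightarrow> v (-1::'a::field) = 0"
  using dv_mult[of v "-1::'a" "-1"] dv_one[of v] by simp
lemma dv_neg: "is_dval v \<Longrightarrow> (x::'a::field) \<noteq> 0 \<Longrightarrow> v (-x) = v x"
  using dv_mult[of v "-1::'a" x] dv_m1[of v] by simp
lemma dv_inv: "is_dval v \<Longrightarrow> (x::'a::field) \<noteq> 0 \<Longrightarrow> v (inverse x) = - v x"
  using dv_mult[of v x "inverse x"] dv_one[of v] by simp
lemma dv_div: "is_dval v \<Longrightarrow> (x::'a::field) \<noteq> 0 \<Longrightarrow> y \<noteq> 0 \<Longrightarrow> v (x / y) = v x - v y"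
  using dv_mult[of v x "inverse y"] dv_inv[of v y] by (simp add: divide_inverse)
lemma dv_pow: "is_dval v \<Longrightarrow> (x::'a::field) \<noteq> 0 \<Longrightarrow> v (x ^ n) = int n * v x"
  by (induction n) (simp_all add: dv_one dv_mult algebra_simps)

lemma pL_iff: "a \<in> pL v k \<longleftrightarrow> a = 0 \<or> k \<le> v a"
  unfolding pL_def by simp
lemma pL_zero: "0 \<in> pL v k" by (simp add: pL_iff)
lemma pL_mono: "k \<le> k' \<Longrightarrow> a \<in> pL v k' \<Longrightarrow> a \<in> pL v k"
  by (auto simp: pL_iff)
lemma pL_add: assumes "is_dval v" "a \<in> pL v k" "b \<in> pL v k" shows "a + b \<in> pL v k"
proof (cases "a = 0 \<or> b = 0 \<or> a + b = 0")
  case True then show ?thesis using assms by (auto simp: pL_iff)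
next
  case False
  then have "min (v a) (v b) \<le> v (a + b)" using dv_ultra[OF assms(1)] by blast
  then show ?thesis using assms False by (auto simp: pL_iff)
qed
lemma pL_neg: assumes "is_dval v" "(a::'a::field) \<in> pL v k" shows "- a \<in> pL v k"
  using assms dv_neg[OF assms(1), of a] by (cases "a = 0") (auto simp: pL_iff)
lemma pL_diff: assumes "is_dval v" "(a::'a::field) \<in> pL v k" "b \<in> pL v k" shows "a - b \<in> pL v k"
  using pL_add[OF assms(1,2) pL_neg[OF assms(1,3)]] by simp
lemma pL_mult: assumes "is_dval v" "(a::'a::field) \<in> pL v k" "b \<in> pL v k'" shows "a * b \<in> pL v (k + k')"
  using assms dv_mult[OF assms(1), of a b] by (cases "a = 0 \<or> b = 0") (auto simp: pL_iff)

lemma hensel_sqrt: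
  fixes t :: "'a::field_char_0"
  assumes dv: "is_dval v" and cp: "v_complete v" and v2: "v 2 = 0" and t: "t \<in> pL v 1"
  shows "\<exists>y. y * y = 1 + t"
proof -
  define f where "f = (\<lambda>y::'a. y - (y * y - (1 + t)) / (2 * y))"
  define s where "s = rec_nat 1 (\<lambda>_ y. f y)"
  have s0: "s 0 = 1" and sS: "\<And>k. s (Suc k) = f (s k)" by (simp_all add: s_def)
  have stepf: "f y \<noteq> 0 \<and> v (f y) = 0 \<and> f y * f y - (1 + t) \<in> pL v (int k + 2) \<and> f y - y \<in> pL v (int k + 1)"
    if y0: "y \<noteq> 0" and vy: "v y = 0" and e: "y * y - (1 + t) \<in> pL v (int k + 1)" for y k
  proof -
    define d where "d = (y * y - (1 + t)) / (2 * y)"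
    have "v (2 * y) = 0" using dv_mult[OF dv, of 2 y] v2 vy y0 by simp
    have d: "d \<in> pL v (int k + 1)"
    proof (cases "y * y - (1 + t) = 0")
      case True then show ?thesis by (simp add: d_def pL_zero)
    next
      case False
      have "v d = v (y * y - (1 + t)) - v (2 * y)"
        unfolding d_def using dv_div[OF dv False] y0 by simp
      then show ?thesis using False e \<open>v (2 * y) = 0\<close> by (auto simp: pL_iff d_def y0)
    qed
    have fy: "f y = y - d" by (simp add: f_def d_def)
    have d1: "d \<in> pL v 1" using pL_mono[OF _ d] by simp
    have fnz: "f y \<noteq> 0"
    proof
      assume "f y = 0" then have "y = d" by (simp add: fy)
      then show False using d1 y0 vy by (simp add: pL_iff)
    qed
    have "f y \<in> pL v 0" unfolding fy
      by (rule pL_diff[OF dv]) (use y0 vy pL_mono[OF _ d1] in \<open>auto simp: pL_iff\<close>)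
    then have vf0: "0 \<le> v (f y)" using fnz by (simp add: pL_iff)
    have vf: "v (f y) = 0"
    proof (rule ccontr)
      assume "v (f y) \<noteq> 0"
      then have "f y \<in> pL v 1" using vf0 by (simp add: pL_iff)
      then have "f y + d \<in> pL v 1" using pL_add[OF dv _ d1] by blast
      then show False using fy y0 vy by (simp add: pL_iff)
    qed
    have "d * (2 * y) = y * y - (1 + t)" unfolding d_def using y0 by simp
    then have "f y * f y - (1 + t) = d * d" unfolding fy by (simp add: algebra_simps)
    moreover have "d * d \<in> pL v (int k + 2)"
      using pL_mult[OF dv d d] by (rule pL_mono[rotated]) simp
    moreover have "f y - y \<in> pL v (int k + 1)" using pL_neg[OF dv d] fy by simp
    ultimately show ?thesis using fnz vf by simp
  qed
  have inv: "s k \<noteq> 0 \<and> v (s k) = 0 \<and> s k * s k - (1 + t) \<in> pL v (int k + 1)" for k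
  proof (induction k)
    case 0 then show ?case using dv_one[OF dv] pL_neg[OF dv t] by (simp add: s0)
  next
    case (Suc k)
    then show ?case using stepf[of "s k" k] by (simp add: sS add.commute)
  qed
  have step: "s (Suc k) - s k \<in> pL v (int k + 1)" for k
    using stepf[of "s k" k] inv[of k] by (simp add: sS)
  have tele: "s (N + j) - s N \<in> pL v (int N + 1)" for N j
  proof (induction j)
    case 0 then show ?case by (simp add: pL_zero)
  next
    case (Suc j)
    have "s (N + Suc j) - s N = (s (Suc (N + j)) - s (N + j)) + (s (N + j) - s N)" by simp
    moreover have "s (Suc (N + j)) - s (N + j) \<in> pL v (int N + 1)"
      using step[of "N + j"] by (rule pL_mono[rotated]) simp
    ultimately show ?case using pL_add[OF dv _ Suc.IH] by (metis add_Suc_right)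
  qed
  have cauchy: "\<forall>k. \<exists>N. \<forall>m\<ge>N. \<forall>n\<ge>N. s m - s n \<in> pL v k"
  proof
    fix k :: int
    show "\<exists>N. \<forall>m\<ge>N. \<forall>n\<ge>N. s m - s n \<in> pL v k"
    proof (intro exI allI impI)
      fix m n assume m: "nat k \<le> m" and n: "nat k \<le> n"
      have a: "s m - s (nat k) \<in> pL v (int (nat k) + 1)" using tele[of "nat k" "m - nat k"] m by simp
      have b: "s n - s (nat k) \<in> pL v (int (nat k) + 1)" using tele[of "nat k" "n - nat k"] n by simp
      have "s m - s n = (s m - s (nat k)) - (s n - s (nat k))" by simp
      then have "s m - s n \<in> pL v (int (nat k) + 1)" using pL_diff[OF dv a b] by simp
      then show "s m - s n \<in> pL v k" by (rule pL_mono[rotated]) simp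
    qed
  qed
  obtain l where l: "\<forall>k. \<exists>N. \<forall>n\<ge>N. s n - l \<in> pL v k"
    using cp cauchy unfolding v_complete_def by blast
  show ?thesis
  proof (rule exI[of _ l], rule ccontr)
    assume D0: "l * l \<noteq> 1 + t"
    define D where "D = l * l - (1 + t)"
    have Dnz: "D \<noteq> 0" using D0 by (simp add: D_def)
    define K where "K = max (v D + 1) 0"
    obtain N where N: "\<forall>n\<ge>N. s n - l \<in> pL v K" using l by blast
    define n where "n = max N (nat K)"
    have h1: "s n - l \<in> pL v K" using N by (simp add: n_def)
    have h1': "s n - l \<in> pL v 0" using h1 by (rule pL_mono[rotated]) (simp add: K_def)
    have sn0: "s n \<in> pL v 0" using inv[of n] by (simp add: pL_iff)
    have two0: "(2::'a) \<in> pL v 0" using v2 by (simp add: pL_iff)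
    have "2 * s n \<in> pL v 0" using pL_mult[OF dv two0 sn0] by simp
    then have "2 * s n - (s n - l) \<in> pL v 0" using pL_diff[OF dv _ h1'] by blast
    then have h2: "s n + l \<in> pL v 0" by (simp add: algebra_simps)
    have h3: "(s n - l) * (s n + l) \<in> pL v K" using pL_mult[OF dv h1 h2] by simp
    have h4: "s n * s n - (1 + t) \<in> pL v K" using inv[of n]
      by (rule conjunct2[OF conjunct2, THEN pL_mono[rotated]]) (simp add: n_def K_def)
    have "D = (s n * s n - (1 + t)) - (s n - l) * (s n + l)" by (simp add: D_def algebra_simps)
    then have "D \<in> pL v K" using pL_diff[OF dv h4 h3] by simp
    then show False using Dnz by (simp add: pL_iff K_def)
  qed
qed

lemma qc_add: "quad_conj \<sigma> \<Longrightarrow> \<sigma> (x + y) = \<sigma> x + \<sigma> y" unfolding quad_conj_def by blast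
lemma qc_mult: "quad_conj \<sigma> \<Longrightarrow> \<sigma> (x * y) = \<sigma> x * \<sigma> y" unfolding quad_conj_def by blast
lemma qc_one: "quad_conj \<sigma> \<Longrightarrow> \<sigma> 1 = 1" unfolding quad_conj_def by blast
lemma qc_invol: "quad_conj \<sigma> \<Longrightarrow> \<sigma> (\<sigma> x) = x" unfolding quad_conj_def by blast
lemma qc_zero: "quad_conj \<sigma> \<Longrightarrow> \<sigma> (0::'a::field) = 0"
proof -
  assume qc: "quad_conj \<sigma>"
  have "\<sigma> 0 + \<sigma> 0 = \<sigma> 0 + (0::'a)" using qc_add[OF qc, of "0::'a" 0] by simp
  then show ?thesis by (metis add_left_cancel)
qed
lemma qc_neg: "quad_conj \<sigma> \<Longrightarrow> \<sigma> (- x::'a::field) = - \<sigma> x"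
  using qc_add[of \<sigma> x "-x"] qc_zero[of \<sigma>] by (metis minus_unique add.right_inverse)
lemma qc_diff: "quad_conj \<sigma> \<Longrightarrow> \<sigma> (x - y::'a::field) = \<sigma> x - \<sigma> y"
  using qc_add[of \<sigma> x "-y"] qc_neg[of \<sigma> y] by simp
lemma qc_nz: "quad_conj \<sigma> \<Longrightarrow> (x::'a::field) \<noteq> 0 \<Longrightarrow> \<sigma> x \<noteq> 0"
  using qc_invol[of \<sigma> x] qc_zero[of \<sigma>] by metis
lemma qc_inverse: assumes "quad_conj \<sigma>" shows "\<sigma> (inverse x::'a::field) = inverse (\<sigma> x)"
proof (cases "x = 0")
  case True then show ?thesis using qc_zero[OF assms] by simp
next
  case False
  have "\<sigma> x * \<sigma> (inverse x) = 1" using qc_mult[OF assms, of x "inverse x"] qc_one[OF assms] False by simp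
  then show ?thesis by (metis inverse_unique)
qed
lemma qc_divide: "quad_conj \<sigma> \<Longrightarrow> \<sigma> (x / y::'a::field) = \<sigma> x / \<sigma> y"
  by (simp add: divide_inverse qc_mult qc_inverse)
lemma qc_pow: "quad_conj \<sigma> \<Longrightarrow> \<sigma> (x ^ n::'a::field) = \<sigma> x ^ n"
  by (induction n) (simp_all add: qc_one qc_mult)

lemma nonsquare:
  fixes p x y :: "'a::field"
  assumes dv: "is_dval v" and p: "p \<noteq> 0" "v p = 1" and x: "x \<noteq> 0" "v x < 0"
    and y: "y * y = 1 + p * x * x"
  shows False
proof -
  define T where "T = p * x * x"
  have vT: "v T = 1 + 2 * v x" unfolding T_def using dv_mult[OF dv] p x by simp
  have Tnz: "T \<noteq> 0" using p x by (simp add: T_def)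
  show False
  proof (cases "y = 0")
    case True
    then have "T = -1" using y by (simp add: T_def eq_neg_iff_add_eq_0 add.commute)
    then show False using vT dv_m1[OF dv] by presburger
  next
    case False
    have vy: "v (y * y) = 2 * v y" using dv_mult[OF dv False False] by simp
    have yy: "y * y \<noteq> 0" using False by simp
    consider "2 * v y > v T" | "2 * v y < v T" | "2 * v y = v T" by linarith
    then show False
    proof cases
      case 1
      have a: "y * y \<in> pL v (v T + 1)" using 1 vy by (simp add: pL_iff)
      have b: "1 \<in> pL v (v T + 1)" using vT x dv_one[OF dv] by (simp add: pL_iff)
      have "y * y - 1 \<in> pL v (v T + 1)" using pL_diff[OF dv a b] .
      moreover have "y * y - 1 = T" using y by (simp add: T_def)
      ultimately show False using Tnz by (simp add: pL_iff)
    next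
      case 2
      have a: "T \<in> pL v (v T)" by (simp add: pL_iff)
      have b: "1 \<in> pL v (v T)" using vT x dv_one[OF dv] by (simp add: pL_iff)
      have "1 + T \<in> pL v (v T)" using pL_add[OF dv b a] .
      then show False using y 2 vy yy by (simp add: pL_iff T_def)
    next
      case 3 then show False using vT by presburger
    qed
  qed
qed

lemma sigma_int:
  fixes x :: "'a::field_char_0"
  assumes dv: "is_dval v" and cp: "v_complete v" and v2: "v 2 = 0" and qc: "quad_conj \<sigma>"
    and p: "\<sigma> p = p" "p \<noteq> 0" "v p = 1" and x: "x \<noteq> 0" "0 \<le> v x"
  shows "0 \<le> v (\<sigma> x)"
proof (rule ccontr)
  assume neg: "\<not> 0 \<le> v (\<sigma> x)"
  have "v (p * x * x) = 1 + 2 * v x" using dv_mult[OF dv] p x by simp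
  then have "p * x * x \<in> pL v 1" using x by (simp add: pL_iff)
  then obtain y where y: "y * y = 1 + p * x * x" using hensel_sqrt[OF dv cp v2] by blast
  have "\<sigma> y * \<sigma> y = 1 + p * \<sigma> x * \<sigma> x"
    using arg_cong[OF y, of \<sigma>] by (simp add: qc_mult[OF qc] qc_add[OF qc] qc_one[OF qc] p)
  then show False using nonsquare[OF dv p(2,3) qc_nz[OF qc x(1)]] neg by simp
qed

lemma sigma_ge:
  fixes x :: "'a::field_char_0"
  assumes dv: "is_dval v" and cp: "v_complete v" and v2: "v 2 = 0" and qc: "quad_conj \<sigma>"
    and p: "\<sigma> p = p" "p \<noteq> 0" "v p = 1" and x: "x \<noteq> 0"
  shows "v x \<le> v (\<sigma> x)"
proof (cases "0 \<le> v x")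
  case True
  define z where "z = x / p ^ nat (v x)"
  have pn: "p ^ nat (v x) \<noteq> 0" using p by simp
  have vpn: "v (p ^ nat (v x)) = v x" using dv_pow[OF dv p(2)] p True by simp
  have z0: "z \<noteq> 0" using x pn by (simp add: z_def)
  have vz: "v z = 0" using dv_div[OF dv x pn] vpn by (simp add: z_def)
  have sz: "\<sigma> z = \<sigma> x / p ^ nat (v x)" by (simp add: z_def qc_divide[OF qc] qc_pow[OF qc] p)
  have "0 \<le> v (\<sigma> z)" using sigma_int[OF dv cp v2 qc p z0] vz by simp
  moreover have "v (\<sigma> z) = v (\<sigma> x) - v x" using sz dv_div[OF dv qc_nz[OF qc x] pn] vpn by simp
  ultimately show ?thesis by simp
next
  case False
  define z where "z = x * p ^ nat (- v x)"
  have pn: "p ^ nat (- v x) \<noteq> 0" using p by simp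
  have vpn: "v (p ^ nat (- v x)) = - v x" using dv_pow[OF dv p(2)] p False by simp
  have z0: "z \<noteq> 0" using x pn by (simp add: z_def)
  have vz: "v z = 0" using dv_mult[OF dv x pn] vpn by (simp add: z_def)
  have sz: "\<sigma> z = \<sigma> x * p ^ nat (- v x)" by (simp add: z_def qc_mult[OF qc] qc_pow[OF qc] p)
  have "0 \<le> v (\<sigma> z)" using sigma_int[OF dv cp v2 qc p z0] vz by simp
  moreover have "v (\<sigma> z) = v (\<sigma> x) - v x" using sz dv_mult[OF dv qc_nz[OF qc x] pn] vpn by simp
  ultimately show ?thesis by simp
qed

lemma sigma_v:
  fixes x :: "'a::field_char_0"
  assumes dv: "is_dval v" and cp: "v_complete v" and v2: "v 2 = 0" and qc: "quad_conj \<sigma>"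
    and ur: "unramified v \<sigma>" and x: "x \<noteq> 0"
  shows "v (\<sigma> x) = v x"
proof -
  obtain p where p: "\<sigma> p = p" "p \<noteq> 0" "v p = 1" using ur unfolding unramified_def Fset_def by blast
  show ?thesis using sigma_ge[OF dv cp v2 qc p x] sigma_ge[OF dv cp v2 qc p qc_nz[OF qc x]]
    qc_invol[OF qc, of x] by simp
qed

lemma tau_zero:
  assumes qc: "quad_conj \<sigma>" and ac: "add_char_conductor v \<sigma> \<tau> c"
  shows "\<tau> (0::'a::field) = 1"
proof -
  have z: "(0::'a) \<in> Fset \<sigma>" using qc_zero[OF qc] by (simp add: Fset_def)
  have "\<tau> 0 = \<tau> 0 * \<tau> 0" using ac z unfolding add_char_conductor_def by (metis add_0)
  moreover have "\<tau> 0 \<noteq> 0" using ac z unfolding add_char_conductor_def by force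
  ultimately show ?thesis by (metis mult_cancel_left1)
qed

lemma Nm_F: "quad_conj \<sigma> \<Longrightarrow> Nm \<sigma> x \<in> Fset \<sigma>"
  by (simp add: Nm_def Fset_def qc_mult qc_invol mult.commute)

lemma supp_bound:
  fixes x :: "'a::field"
  assumes dv: "is_dval v" and qc: "quad_conj \<sigma>" and vs: "\<forall>x. x \<noteq> 0 \<longrightarrow> v (\<sigma> x) = v x"
    and ac: "add_char_conductor v \<sigma> \<tau> c"
    and H: "\<forall>u\<in>Fset \<sigma> \<inter> pL v (int n). \<tau> (u * Nm \<sigma> x) = 1"
  shows "x \<in> pL v \<lceil>real_of_int (c - int n) / 2\<rceil>"
proof (cases "x = 0")
  case True then show ?thesis by (simp add: pL_zero)
next
  case False
  show ?thesis
  proof (rule ccontr)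
    assume "x \<notin> pL v \<lceil>real_of_int (c - int n) / 2\<rceil>"
    then have "v x < \<lceil>real_of_int (c - int n) / 2\<rceil>" using False by (simp add: pL_iff)
    then have "real_of_int (v x) < real_of_int (c - int n) / 2" by (simp add: less_ceiling_iff)
    then have "real_of_int (2 * v x) < real_of_int (c - int n)" by simp
    then have lt: "int n + 2 * v x < c" by linarith
    have vN: "v (Nm \<sigma> x) = 2 * v x" using dv_mult[OF dv False qc_nz[OF qc False]] vs False
      by (simp add: Nm_def)
    have Nnz: "Nm \<sigma> x \<noteq> 0" using False qc_nz[OF qc False] by (simp add: Nm_def)
    have "\<not> (\<forall>y \<in> Fset \<sigma> \<inter> pL v (int n + 2 * v x). \<tau> y = 1)"
      using ac lt unfolding add_char_conductor_def by auto
    then obtain y where y: "y \<in> Fset \<sigma>" "y \<in> pL v (int n + 2 * v x)" "\<tau> y \<noteq> 1" by blast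
    have y0: "y \<noteq> 0" using y tau_zero[OF qc ac] by auto
    define u where "u = y / Nm \<sigma> x"
    have uF: "u \<in> Fset \<sigma>" using y Nm_F[OF qc, of x]
      by (simp add: u_def Fset_def qc_divide[OF qc])
    have "v u = v y - 2 * v x" using dv_div[OF dv y0 Nnz] vN by (simp add: u_def)
    then have un: "u \<in> pL v (int n)" using y y0 by (simp add: pL_iff)
    have "u * Nm \<sigma> x = y" using Nnz by (simp add: u_def)
    then show False using H uF un y by auto
  qed
qed

lemma Tr_F: "quad_conj \<sigma> \<Longrightarrow> Tr \<sigma> x \<in> Fset \<sigma>"
  by (simp add: Tr_def Fset_def qc_add qc_invol add.commute)

lemma Tr_pL:
  assumes dv: "is_dval v" and qc: "quad_conj \<sigma>" and vs: "\<forall>x. x \<noteq> 0 \<longrightarrow> v (\<sigma> x) = v x"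
    and w: "(w::'a::field) \<in> pL v k"
  shows "Tr \<sigma> w \<in> pL v k"
proof -
  have "\<sigma> w \<in> pL v k" using w vs qc_zero[OF qc] by (cases "w = 0") (auto simp: pL_iff)
  then show ?thesis unfolding Tr_def using pL_add[OF dv w] by blast
qed

theorem lemma8p2:
  fixes v :: "'l::field_char_0 \<Rightarrow> int"
    and \<sigma> :: "'l \<Rightarrow> 'l"
    and \<tau> \<chi> :: "'l \<Rightarrow> complex"
    and I :: "('l \<Rightarrow> complex) \<Rightarrow> complex"
    and \<pi> :: "'l m2 \<Rightarrow> ('l \<Rightarrow> complex) \<Rightarrow> ('l \<Rightarrow> complex)"
    and c :: int and n :: nat and \<Phi> :: "'l \<Rightarrow> complex"
  assumes "p_adic_field v"
    and "v 2 = 0"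
    and "quad_conj \<sigma>"
    and "unramified v \<sigma>"
    and "add_char_conductor v \<sigma> \<tau> c"
    and "char_Lx v \<chi>"
    and "\<not> factors_through_norm \<sigma> \<chi>"
    and "haar_integral v I"
    and "self_dual v I \<sigma> \<tau>"
    and "weil_rep v \<sigma> \<tau> \<chi> I \<pi>"
    and "1 \<le> n"
    and "\<Phi> \<in> S_chi v \<sigma> \<chi>"
    and "\<forall>k\<in>Kn v \<sigma> n. \<pi> k \<Phi> = \<Phi>"
  shows "(\<forall>x. \<Phi> x \<noteq> 0 \<longrightarrow> x \<in> pL v \<lceil>real_of_int (c - int n) / 2\<rceil>) \<and>
         (\<forall>x y. y \<in> pL v (c - \<lceil>real_of_int (c - int n) / 2\<rceil>) \<longrightarrow> \<Phi> (x + y) = \<Phi> x)"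
proof -
  note padic = assms(1) and v2 = assms(2) and qc = assms(3) and ur = assms(4) and ac = assms(5)
    and sd = assms(9) and wr = assms(10) and PhiS = assms(12) and Kfix = assms(13)
  have dv: "is_dval v" and cp: "v_complete v" using padic unfolding p_adic_field_def by auto
  have vs: "\<forall>x. x \<noteq> 0 \<longrightarrow> v (\<sigma> x) = v x" using sigma_v[OF dv cp v2 qc ur] by blast
  define S where "S = S_chi v \<sigma> \<chi>"
  have Scl: "\<forall>g\<in>Gplus \<sigma>. \<forall>\<Psi>\<in>S. \<pi> g \<Psi> \<in> S"
    using wr unfolding weil_rep_def Let_def S_def by (elim conjE) assumption
  have comp: "\<forall>g\<in>Gplus \<sigma>. \<forall>h\<in>Gplus \<sigma>. \<forall>\<Psi>\<in>S. \<pi> (m2mul g h) \<Psi> = \<pi> g (\<pi> h \<Psi>)"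
    using wr unfolding weil_rep_def Let_def S_def by (elim conjE) assumption
  have unip: "\<forall>u\<in>Fset \<sigma>. \<forall>\<Psi>\<in>S. \<pi> (1, u, 0, 1) \<Psi> = (\<lambda>x. \<tau> (u * Nm \<sigma> x) * \<Psi> x)"
    using wr unfolding weil_rep_def Let_def S_def by (elim conjE) assumption
  have "\<exists>\<gamma>. cmod \<gamma> = 1 \<and> (\<forall>\<Psi>\<in>S. \<pi> (0, 1, -1, 0) \<Psi> = (\<lambda>x. \<gamma> * FT I \<sigma> \<tau> \<Psi> (\<sigma> x)))"
    using wr unfolding weil_rep_def Let_def S_def by (elim conjE) assumption
  then obtain \<gamma> where g1: "cmod \<gamma> = 1" and weyl: "\<forall>\<Psi>\<in>S. \<pi> (0, 1, -1, 0) \<Psi> = (\<lambda>x. \<gamma> * FT I \<sigma> \<tau> \<Psi> (\<sigma> x))"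
    by blast
  have F0: "0 \<in> Fset \<sigma>" and F1: "1 \<in> Fset \<sigma>" and Fm1: "-1 \<in> Fset \<sigma>"
    using qc_zero[OF qc] qc_one[OF qc] qc_neg[OF qc, of 1] by (auto simp: Fset_def)
  have Fneg: "u \<in> Fset \<sigma> \<Longrightarrow> - u \<in> Fset \<sigma>" for u using qc_neg[OF qc, of u] by (simp add: Fset_def)
  have N1: "(1::'l) \<in> NLx \<sigma>"
  proof -
    have "Nm \<sigma> 1 = 1" using qc_one[OF qc] by (simp add: Nm_def)
    then show ?thesis unfolding NLx_def by (metis (mono_tags) imageI mem_Collect_eq one_neq_zero)
  qed
  have Gu: "u \<in> Fset \<sigma> \<Longrightarrow> (1, u, 0, 1) \<in> Gplus \<sigma>" for u using F0 F1 N1 by (simp add: Gplus_def)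
  have Gl: "u \<in> Fset \<sigma> \<Longrightarrow> (1, 0, u, 1) \<in> Gplus \<sigma>" for u using F0 F1 N1 by (simp add: Gplus_def)
  have Gw: "(0, 1, -1, 0) \<in> Gplus \<sigma>" using F0 F1 Fm1 N1 by (simp add: Gplus_def)
  have Ku: "u \<in> Fset \<sigma> \<Longrightarrow> u \<in> pL v (int n) \<Longrightarrow> (1, u, 0, 1) \<in> Kn v \<sigma> n" for u
    using F0 F1 by (simp add: Kn_def pL_zero)
  have Kl: "u \<in> Fset \<sigma> \<Longrightarrow> u \<in> pL v (int n) \<Longrightarrow> (1, 0, u, 1) \<in> Kn v \<sigma> n" for u
    using F0 F1 by (simp add: Kn_def pL_zero)
  have fixed_tau: "\<forall>u\<in>Fset \<sigma> \<inter> pL v (int n). \<tau> (u * Nm \<sigma> x) = 1"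
    if PS: "\<Psi> \<in> S" and Pf: "\<forall>u\<in>Fset \<sigma> \<inter> pL v (int n). \<pi> (1, u, 0, 1) \<Psi> = \<Psi>" and nz: "\<Psi> x \<noteq> 0"
    for \<Psi> x
  proof
    fix u assume u: "u \<in> Fset \<sigma> \<inter> pL v (int n)"
    have "(\<lambda>x. \<tau> (u * Nm \<sigma> x) * \<Psi> x) = \<Psi>" using unip PS u Pf by auto
    then have "\<tau> (u * Nm \<sigma> x) * \<Psi> x = \<Psi> x" by (rule fun_cong)
    then show "\<tau> (u * Nm \<sigma> x) = 1" using nz by simp
  qed
  define a where "a = \<lceil>real_of_int (c - int n) / 2\<rceil>"
  have part1: "\<forall>x. \<Psi> x \<noteq> 0 \<longrightarrow> x \<in> pL v a"
    if PS: "\<Psi> \<in> S" and Pf: "\<forall>u\<in>Fset \<sigma> \<inter> pL v (int n). \<pi> (1, u, 0, 1) \<Psi> = \<Psi>" for \<Psi>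
    using supp_bound[OF dv qc vs ac] fixed_tau[OF PS Pf] unfolding a_def by blast
  have PS: "\<Phi> \<in> S" using PhiS by (simp add: S_def)
  have P1: "\<forall>x. \<Phi> x \<noteq> 0 \<longrightarrow> x \<in> pL v a"
    using part1[OF PS] Kfix Ku by blast
  define \<Psi> where "\<Psi> = \<pi> (0, 1, -1, 0) \<Phi>"
  have PsS: "\<Psi> \<in> S" using Scl Gw PS by (simp add: \<Psi>_def)
  have Psf: "\<forall>u\<in>Fset \<sigma> \<inter> pL v (int n). \<pi> (1, u, 0, 1) \<Psi> = \<Psi>"
  proof
    fix u assume u: "u \<in> Fset \<sigma> \<inter> pL v (int n)"
    have mu: "-u \<in> Fset \<sigma>" "-u \<in> pL v (int n)" using u Fneg pL_neg[OF dv] by auto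
    have uF: "u \<in> Fset \<sigma>" using u by blast
    have e: "m2mul (1, u, 0, 1) (0, 1, -1, 0) = m2mul (0, 1, -1, 0) (1, 0, -u, 1)" by simp
    have c1: "\<pi> (m2mul (1, u, 0, 1) (0, 1, -1, 0)) \<Phi> = \<pi> (1, u, 0, 1) \<Psi>"
      unfolding \<Psi>_def using bspec[OF bspec[OF bspec[OF comp Gu[OF uF]] Gw] PS] .
    have c2: "\<pi> (m2mul (0, 1, -1, 0) (1, 0, -u, 1)) \<Phi> = \<pi> (0, 1, -1, 0) (\<pi> (1, 0, -u, 1) \<Phi>)"
      using bspec[OF bspec[OF bspec[OF comp Gw] Gl[OF mu(1)]] PS] .
    have "\<pi> (1, u, 0, 1) \<Psi> = \<pi> (0, 1, -1, 0) (\<pi> (1, 0, -u, 1) \<Phi>)"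
      using c1 c2 e by simp
    also have "\<pi> (1, 0, -u, 1) \<Phi> = \<Phi>" using Kfix Kl mu by blast
    finally show "\<pi> (1, u, 0, 1) \<Psi> = \<Psi>" by (simp add: \<Psi>_def)
  qed
  have P2: "\<forall>x. \<Psi> x \<noteq> 0 \<longrightarrow> x \<in> pL v a" using part1[OF PsS Psf] .
  have FTsupp: "z \<in> pL v a" if nz: "FT I \<sigma> \<tau> \<Phi> z \<noteq> 0" for z
  proof -
    have "\<Psi> (\<sigma> z) = \<gamma> * FT I \<sigma> \<tau> \<Phi> z" using weyl PS qc_invol[OF qc] by (simp add: \<Psi>_def)
    moreover have "\<gamma> \<noteq> 0" using g1 by auto
    ultimately have "\<sigma> z \<in> pL v a" using P2 nz by simp
    then show ?thesis using vs qc_nz[OF qc, of z] by (cases "z = 0") (auto simp: pL_iff)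
  qed
  have schw: "schwartz v \<Phi>" using PhiS by (simp add: S_chi_def)
  have inv: "\<Phi> w = FT I \<sigma> \<tau> (FT I \<sigma> \<tau> \<Phi>) (- w)" for w
    using sd schw unfolding self_dual_def by simp
  have P3: "\<Phi> (x + y) = \<Phi> x" if y: "y \<in> pL v (c - a)" for x y
  proof -
    have "(\<lambda>z. FT I \<sigma> \<tau> \<Phi> z * pairing \<sigma> \<tau> (- (x + y)) z) = (\<lambda>z. FT I \<sigma> \<tau> \<Phi> z * pairing \<sigma> \<tau> (- x) z)"
    proof
      fix z
      show "FT I \<sigma> \<tau> \<Phi> z * pairing \<sigma> \<tau> (- (x + y)) z = FT I \<sigma> \<tau> \<Phi> z * pairing \<sigma> \<tau> (- x) z"
      proof (cases "FT I \<sigma> \<tau> \<Phi> z = 0")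
        case True then show ?thesis by simp
      next
        case False
        then have z: "z \<in> pL v a" using FTsupp by blast
        have "- y * z \<in> pL v (c - a + a)" using pL_mult[OF dv pL_neg[OF dv y] z] .
        then have B: "Tr \<sigma> (- y * z) \<in> pL v c" using Tr_pL[OF dv qc vs] by simp
        have tB: "\<tau> (Tr \<sigma> (- y * z)) = 1" using ac B Tr_F[OF qc] unfolding add_char_conductor_def by blast
        have "Tr \<sigma> (- (x + y) * z) = Tr \<sigma> (- x * z) + Tr \<sigma> (- y * z)"
        proof -
          have "- (x + y) * z = - x * z + - y * z" by (simp add: algebra_simps)
          then show ?thesis unfolding Tr_def by (simp only: qc_add[OF qc]) (simp add: algebra_simps)
        qed
        then have "\<tau> (Tr \<sigma> (- (x + y) * z)) = \<tau> (Tr \<sigma> (- x * z)) * \<tau> (Tr \<sigma> (- y * z))"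
          using ac Tr_F[OF qc] unfolding add_char_conductor_def by metis
        then show ?thesis using tB by (simp add: pairing_def)
      qed
    qed
    then show ?thesis using inv[of "x + y"] inv[of x] by (simp add: FT_def)
  qed
  show ?thesis using P1 P3 unfolding a_def by blast
qed

end
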